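(* Let $m$ be a positive integer. If $\|m\alpha\|\ge\|q_{k-1}\alpha\|+(a_{k+1}+1)\|q_k\alpha\|$ for some $k\ge2$, then $\mathrm{ab}_\alpha(m)<q_k-1$.
   Context: $\alpha\in(0,1)$ irrational, $\alpha=[0;a_1,a_2,\ldots]$ with positive integers $a_i$, $a_1\ge2$; $q_{-1}=0$, $q_0=1$, $q_1=a_1$, $q_k=a_kq_{k-1}+q_{k-2}$ ($k\ge2$). $\|x\|$ is the distance from $x$ to the nearest integer. Sturmian words of slope $\alpha$: with $R(\rho)=\{\rho+\alpha\}$ on $[0,1)$ and either $I_0=[0,1-\alpha)$ or $I_0=(0,1-\alpha]$ ($I_1$ its complement), $\mathbf{s}_{\rho,\alpha}$ has $n$-th letter $0$ iff $R^n(\rho)\in I_0$; they share a set $\mathcal{L}_\alpha$ of finite factors. An abelian power of period $m$ and exponent $e$ is a concatenation of $e$ pairwise abelian equivalent words (same numbers of $0$s and $1$s) of length $m$; $\mathrm{ab}_\alpha(m)$ is the maximum exponent of an abelian power of period $m$ in $\mathcal{L}_\alpha$ (it is known that $\mathrm{ab}_\alpha(m)=\lfloor 1/\|m\alpha\|\rfloor$). *)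

theory Defs
  imports Complex_Main
begin

definition dist_int :: "real \<Rightarrow> real" where
  "dist_int x = \<bar>x - of_int (round x)\<bar>"

text \<open>Continued fraction expansion of a real in (0,1) via the Gauss map:
  cf_rem x 0 = x, cf_rem x (k+1) = frac (1 / cf_rem x k), and
  the partial quotient a_(k+1) = floor (1 / cf_rem x k); a_0 = 0.\<close>
fun cf_rem :: "real \<Rightarrow> nat \<Rightarrow> real" where
  "cf_rem x 0 = x"
| "cf_rem x (Suc k) = frac (1 / cf_rem x k)"

fun cf_a :: "real \<Rightarrow> nat \<Rightarrow> nat" where
  "cf_a x 0 = 0"
| "cf_a x (Suc k) = nat \<lfloor>1 / cf_rem x k\<rfloor>"

fun cf_q :: "real \<Rightarrow> nat \<Rightarrow> nat" where
  "cf_q x 0 = 1"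
| "cf_q x (Suc 0) = cf_a x 1"
| "cf_q x (Suc (Suc k)) = cf_a x (Suc (Suc k)) * cf_q x (Suc k) + cf_q x k"

text \<open>Sturmian words s_{rho,alpha} (letters 0/1), for the two choices of I_0:
  variant False: I_0 = [0, 1-alpha); variant True: I_0 = (0, 1-alpha].\<close>
definition sturmian :: "bool \<Rightarrow> real \<Rightarrow> real \<Rightarrow> nat \<Rightarrow> nat" where
  "sturmian v \<rho> \<alpha> n =
     (let y = frac (\<rho> + real n * \<alpha>) in
      if (if v then 0 < y \<and> y \<le> 1 - \<alpha> else y < 1 - \<alpha>) then 0 else 1)"

definition sturm_lang :: "real \<Rightarrow> nat list set" where
  "sturm_lang \<alpha> = {w. \<exists>v \<rho> i. 0 \<le> \<rho> \<and> \<rho> < 1 \<and>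
       w = map (sturmian v \<rho> \<alpha>) [i..<i + length w]}"

definition abelian_power :: "nat list \<Rightarrow> nat \<Rightarrow> nat \<Rightarrow> bool" where
  "abelian_power w m e \<longleftrightarrow> length w = m * e \<and>
     (\<forall>j<e. \<forall>l<e.
        count_list (take m (drop (j*m) w)) 0 = count_list (take m (drop (l*m) w)) 0 \<and>
        count_list (take m (drop (j*m) w)) 1 = count_list (take m (drop (l*m) w)) 1)"

definition ab :: "real \<Rightarrow> nat \<Rightarrow> nat" where
  "ab \<alpha> m = (GREATEST e. \<exists>w\<in>sturm_lang \<alpha>. abelian_power w m e)"

end

theory Submission
  imports Defs
begin

definition GG :: "bool \<Rightarrow> real \<Rightarrow> real \<Rightarrow> nat \<Rightarrow> int" where
  "GG v \<rho> \<alpha> n = (if v then \<lceil>\<rho> + real n * \<alpha>\<rceil> else \<lfloor>\<rho> + real n * \<alpha>\<rfloor>)"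

lemma letter_eq:
  assumes "0 < \<alpha>" "\<alpha> < 1"
  shows "int (sturmian v \<rho> \<alpha> n) = GG v \<rho> \<alpha> (Suc n) - GG v \<rho> \<alpha> n"
proof -
  define x where "x = \<rho> + real n * \<alpha>"
  have xs: "\<rho> + real (Suc n) * \<alpha> = x + \<alpha>" unfolding x_def by (simp add: algebra_simps)
  have fl: "of_int \<lfloor>x\<rfloor> \<le> x" "x < of_int \<lfloor>x\<rfloor> + 1" by linarith+
  have fr: "frac x = x - of_int \<lfloor>x\<rfloor>" by (simp add: frac_def)
  show ?thesis
  proof (cases v)
    case False
    show ?thesis
    proof (cases "frac x < 1 - \<alpha>")
      case True
      have "\<lfloor>x + \<alpha>\<rfloor> = \<lfloor>x\<rfloor>" by (insert fl fr True assms, intro floor_unique; (simp only: of_int_add of_int_1)?; linarith)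
      then show ?thesis using False True unfolding sturmian_def GG_def xs x_def[symmetric] by simp
    next
      case c2: False
      have "\<lfloor>x + \<alpha>\<rfloor> = \<lfloor>x\<rfloor> + 1" by (insert fl fr c2 assms, intro floor_unique; (simp only: of_int_add of_int_1)?; linarith)
      then show ?thesis using False c2 unfolding sturmian_def GG_def xs x_def[symmetric] by simp
    qed
  next
    case True
    show ?thesis
    proof (cases "frac x = 0")
      case z: True
      have xi: "x = of_int \<lfloor>x\<rfloor>" using fr z by simp
      have "\<lceil>x\<rceil> = \<lfloor>x\<rfloor>" using xi by (metis ceiling_of_int)
      moreover have "\<lceil>x + \<alpha>\<rceil> = \<lfloor>x\<rfloor> + 1" by (insert xi assms, intro ceiling_unique; (simp only: of_int_add of_int_1)?; linarith)
      ultimately show ?thesis using True z unfolding sturmian_def GG_def xs x_def[symmetric] by simp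
    next
      case nz: False
      have pos: "0 < frac x" using nz frac_ge_0[of x] by linarith
      have cx: "\<lceil>x\<rceil> = \<lfloor>x\<rfloor> + 1" by (insert pos fr fl, intro ceiling_unique; (simp only: of_int_add of_int_1)?; linarith)
      show ?thesis
      proof (cases "frac x \<le> 1 - \<alpha>")
        case c1: True
        have "\<lceil>x + \<alpha>\<rceil> = \<lfloor>x\<rfloor> + 1" by (insert c1 pos fr fl assms, intro ceiling_unique; (simp only: of_int_add of_int_1)?; linarith)
        then show ?thesis using True c1 pos cx unfolding sturmian_def GG_def xs x_def[symmetric] by simp
      next
        case c2: False
        have "\<lceil>x + \<alpha>\<rceil> = \<lfloor>x\<rfloor> + 2" by (insert c2 pos fr fl assms, intro ceiling_unique; (simp only: of_int_add of_int_1 of_int_numeral)?; linarith)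
        then show ?thesis using True c2 pos cx unfolding sturmian_def GG_def xs x_def[symmetric] by simp
      qed
    qed
  qed
qed

lemma GG_approx: "\<exists>d. GG v \<rho> \<alpha> n = \<rho> + real n * \<alpha> + d \<and> (if v then 0 \<le> d \<and> d < 1 else -1 < d \<and> d \<le> 0)"
proof (cases v)
  case True
  show ?thesis using True unfolding GG_def
    by (intro exI[of _ "of_int \<lceil>\<rho> + real n * \<alpha>\<rceil> - (\<rho> + real n * \<alpha>)"]) (simp; linarith)
next
  case False
  show ?thesis using False unfolding GG_def
    by (intro exI[of _ "of_int \<lfloor>\<rho> + real n * \<alpha>\<rfloor> - (\<rho> + real n * \<alpha>)"]) (simp; linarith)
qed

lemma GG_diff: "\<bar>real_of_int (GG v \<rho> \<alpha> n2 - GG v \<rho> \<alpha> n1) - (real n2 - real n1) * \<alpha>\<bar> < 1"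
proof -
  obtain d1 where d1: "GG v \<rho> \<alpha> n1 = \<rho> + real n1 * \<alpha> + d1" "(if v then 0 \<le> d1 \<and> d1 < 1 else -1 < d1 \<and> d1 \<le> 0)"
    using GG_approx by blast
  obtain d2 where d2: "GG v \<rho> \<alpha> n2 = \<rho> + real n2 * \<alpha> + d2" "(if v then 0 \<le> d2 \<and> d2 < 1 else -1 < d2 \<and> d2 \<le> 0)"
    using GG_approx by blast
  have "real_of_int (GG v \<rho> \<alpha> n2 - GG v \<rho> \<alpha> n1) - (real n2 - real n1) * \<alpha> = d2 - d1"
    using d1(1) d2(1) by (simp add: algebra_simps)
  moreover have "\<bar>d2 - d1\<bar> < 1" using d1(2) d2(2) by (cases v) auto
  ultimately show ?thesis by simp
qed

lemma count_sum:
  assumes "\<forall>x\<in>set xs. f x \<in> {0, 1::nat}"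
  shows "int (count_list (map f xs) 1) = (\<Sum>x\<leftarrow>xs. int (f x))"
  using assms by (induction xs) auto

lemma telescope: "(\<Sum>n\<leftarrow>[a..<a+m]. (g (Suc n) - g n :: int)) = g (a+m) - g a"
  by (induction m) auto

lemma sturm01: "sturmian v \<rho> \<alpha> n \<in> {0,1}"
  unfolding sturmian_def Let_def by auto

lemma block_count:
  assumes "0 < \<alpha>" "\<alpha> < 1"
  shows "int (count_list (map (sturmian v \<rho> \<alpha>) [a..<a+m]) 1) = GG v \<rho> \<alpha> (a+m) - GG v \<rho> \<alpha> a"
proof -
  have "int (count_list (map (sturmian v \<rho> \<alpha>) [a..<a+m]) 1) = (\<Sum>n\<leftarrow>[a..<a+m]. int (sturmian v \<rho> \<alpha> n))"
    by (rule count_sum) (auto simp: sturmian_def Let_def)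
  also have "\<dots> = (\<Sum>n\<leftarrow>[a..<a+m]. GG v \<rho> \<alpha> (Suc n) - GG v \<rho> \<alpha> n)"
    using letter_eq[OF assms] by simp
  also have "\<dots> = GG v \<rho> \<alpha> (a+m) - GG v \<rho> \<alpha> a" by (rule telescope)
  finally show ?thesis .
qed

lemma dist_int_le: "dist_int x \<le> \<bar>x - of_int n\<bar>"
proof -
  have h: "\<bar>of_int (round x) - x\<bar> \<le> 1/2" by (rule of_int_round_abs_le)
  show ?thesis
  proof (cases "n = round x")
    case True then show ?thesis by (simp add: dist_int_def)
  next
    case False
    then have "\<bar>n - round x\<bar> \<ge> 1" by linarith
    then have "real_of_int \<bar>n - round x\<bar> \<ge> 1" by linarith
    then have "\<bar>real_of_int n - of_int (round x)\<bar> \<ge> 1" by simp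
    then show ?thesis using h unfolding dist_int_def by linarith
  qed
qed

lemma abel_bound:
  assumes "0 < \<alpha>" "\<alpha> < 1" "m > 0" "w \<in> sturm_lang \<alpha>" "abelian_power w m e"
  shows "real e * dist_int (real m * \<alpha>) < 1"
proof (cases "e = 0")
  case True then show ?thesis by simp
next
  case False
  obtain v \<rho> i where w: "w = map (sturmian v \<rho> \<alpha>) [i..<i + length w]"
    using assms(4) unfolding sturm_lang_def by blast
  have len: "length w = m * e" using assms(5) unfolding abelian_power_def by blast
  have eqc: "\<And>j. j < e \<Longrightarrow> count_list (take m (drop (j*m) w)) 1 = count_list (take m (drop (0*m) w)) 1"
    using assms(5) False unfolding abelian_power_def by blast
  have blk: "\<And>j. j < e \<Longrightarrow> take m (drop (j*m) w) = map (sturmian v \<rho> \<alpha>) [i + j*m..<i+j*m+m]"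
  proof -
    fix j assume j: "j < e"
    have "Suc j * m \<le> e * m" using j by (intro mult_le_mono1) simp
    then have "i + j*m + m \<le> i + m * e" by (simp add: algebra_simps)
    then show "take m (drop (j*m) w) = map (sturmian v \<rho> \<alpha>) [i + j*m..<i+j*m+m]"
      by (subst w) (simp add: len drop_map take_map)
  qed
  define c where "c = GG v \<rho> \<alpha> (i + m) - GG v \<rho> \<alpha> i"
  have cj: "\<And>j. j < e \<Longrightarrow> GG v \<rho> \<alpha> (i + j*m + m) - GG v \<rho> \<alpha> (i + j*m) = c"
  proof -
    fix j assume j: "j < e"
    have "int (count_list (take m (drop (j*m) w)) 1) = GG v \<rho> \<alpha> (i + j*m + m) - GG v \<rho> \<alpha> (i + j*m)"
      using blk[OF j] block_count[OF assms(1,2)] by simp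
    moreover have "int (count_list (take m (drop (0*m) w)) 1) = c"
      using blk[of 0] False block_count[OF assms(1,2)] unfolding c_def by simp
    ultimately show "GG v \<rho> \<alpha> (i + j*m + m) - GG v \<rho> \<alpha> (i + j*m) = c" using eqc[OF j] by simp
  qed
  have tot: "\<And>t. t \<le> e \<Longrightarrow> GG v \<rho> \<alpha> (i + t*m) - GG v \<rho> \<alpha> i = int t * c"
  proof -
    fix t show "t \<le> e \<Longrightarrow> GG v \<rho> \<alpha> (i + t*m) - GG v \<rho> \<alpha> i = int t * c"
    proof (induction t)
      case 0 then show ?case by simp
    next
      case (Suc t)
      have "GG v \<rho> \<alpha> (i + Suc t*m) = GG v \<rho> \<alpha> (i + t*m + m)" by (simp add: algebra_simps)
      then show ?case using Suc cj[of t] by (simp add: algebra_simps)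
    qed
  qed
  have "\<bar>real_of_int (GG v \<rho> \<alpha> (i + e*m) - GG v \<rho> \<alpha> i) - (real (i + e*m) - real i) * \<alpha>\<bar> < 1"
    by (rule GG_diff)
  then have "\<bar>real e * of_int c - real e * (real m * \<alpha>)\<bar> < 1"
    using tot[of e] by (simp add: algebra_simps)
  then have "real e * \<bar>real m * \<alpha> - of_int c\<bar> < 1"
  proof -
    assume h: "\<bar>real e * of_int c - real e * (real m * \<alpha>)\<bar> < 1"
    have "real e * of_int c - real e * (real m * \<alpha>) = real e * (of_int c - real m * \<alpha>)" by (simp add: algebra_simps)
    then have "\<bar>real e * of_int c - real e * (real m * \<alpha>)\<bar> = real e * \<bar>real m * \<alpha> - of_int c\<bar>"
      by (simp add: abs_mult abs_minus_commute)
    then show ?thesis using h by simp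
  qed
  moreover have "real e * dist_int (real m * \<alpha>) \<le> real e * \<bar>real m * \<alpha> - of_int c\<bar>"
    by (intro mult_left_mono dist_int_le) simp
  ultimately show ?thesis by linarith
qed


lemma rem_props:
  assumes "0 < \<alpha>" "\<alpha> < 1" "\<alpha> \<notin> \<rat>"
  shows "0 < cf_rem \<alpha> n \<and> cf_rem \<alpha> n < 1 \<and> cf_rem \<alpha> n \<notin> \<rat>"
proof (induction n)
  case 0 then show ?case using assms by simp
next
  case (Suc n)
  define r where "r = cf_rem \<alpha> n"
  have r: "0 < r" "r < 1" "r \<notin> \<rat>" using Suc unfolding r_def by auto
  have i1: "1 / r \<notin> \<rat>"
  proof
    assume "1 / r \<in> \<rat>"
    then have "1 / (1 / r) \<in> \<rat>" by (rule Rats_divide[OF Rats_1])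
    then show False using r by simp
  qed
  have i2: "frac (1 / r) \<notin> \<rat>"
  proof
    assume "frac (1 / r) \<in> \<rat>"
    then have "frac (1 / r) + of_int \<lfloor>1/r\<rfloor> \<in> \<rat>" by (rule Rats_add[OF _ Rats_of_int])
    moreover have "frac (1 / r) + of_int \<lfloor>1/r\<rfloor> = 1 / r" by (simp add: frac_def)
    ultimately show False using i1 by metis
  qed
  have "frac (1 / r) \<noteq> 0" using i2 Rats_0 by metis
  then have "0 < frac (1/r)" using frac_ge_0[of "1/r"] by linarith
  then show ?case using i2 frac_lt_1 unfolding r_def by simp
qed

lemma a_props:
  assumes "0 < \<alpha>" "\<alpha> < 1" "\<alpha> \<notin> \<rat>"
  shows "real (cf_a \<alpha> (Suc n)) = of_int \<lfloor>1 / cf_rem \<alpha> n\<rfloor>" "cf_a \<alpha> (Suc n) \<ge> 1"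
    "cf_rem \<alpha> (Suc n) = 1 / cf_rem \<alpha> n - real (cf_a \<alpha> (Suc n))"
proof -
  have r: "0 < cf_rem \<alpha> n" "cf_rem \<alpha> n < 1" using rem_props[OF assms] by auto
  have "1 < 1 / cf_rem \<alpha> n" using r by simp
  then have f: "\<lfloor>1 / cf_rem \<alpha> n\<rfloor> \<ge> 1" by linarith
  show 1: "real (cf_a \<alpha> (Suc n)) = of_int \<lfloor>1 / cf_rem \<alpha> n\<rfloor>" 
  proof -
    have z: "0 \<le> \<lfloor>1 / cf_rem \<alpha> n\<rfloor>" using f by linarith
    show ?thesis unfolding cf_a.simps using of_nat_nat[OF z] by metis
  qed
  have "real (cf_a \<alpha> (Suc n)) \<ge> 1" using 1 f by linarith
  then show "cf_a \<alpha> (Suc n) \<ge> 1" by simp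
  show "cf_rem \<alpha> (Suc n) = 1 / cf_rem \<alpha> n - real (cf_a \<alpha> (Suc n))"
    using 1 by (simp add: frac_def)
qed

definition PP :: "real \<Rightarrow> nat \<Rightarrow> real" where "PP \<alpha> n = (\<Prod>i<n. cf_rem \<alpha> i)"

fun qq :: "real \<Rightarrow> nat \<Rightarrow> nat" where
  "qq \<alpha> 0 = 0" | "qq \<alpha> (Suc n) = cf_q \<alpha> n"

fun pp :: "real \<Rightarrow> nat \<Rightarrow> int" where
  "pp \<alpha> 0 = 1" | "pp \<alpha> (Suc 0) = 0"
| "pp \<alpha> (Suc (Suc n)) = int (cf_a \<alpha> (Suc n)) * pp \<alpha> (Suc n) + pp \<alpha> n"

lemma qq_rec: "qq \<alpha> (Suc (Suc n)) = cf_a \<alpha> (Suc n) * qq \<alpha> (Suc n) + qq \<alpha> n"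
  by (cases n) auto

lemma qq_1: "qq \<alpha> (Suc 0) = 1" by simp
lemma qq_2: "qq \<alpha> 2 = cf_a \<alpha> 1" by (simp add: numeral_2_eq_2)

declare qq.simps(2)[simp del] cf_a.simps(2)[simp del]

context
  fixes \<alpha> :: real
  assumes A: "0 < \<alpha>" "\<alpha> < 1" "\<alpha> \<notin> \<rat>"
begin

lemma PP_pos: "0 < PP \<alpha> n"
  unfolding PP_def using rem_props[OF A] by (intro prod_pos) auto

lemma PP_Suc: "PP \<alpha> (Suc n) = PP \<alpha> n * cf_rem \<alpha> n"
  unfolding PP_def by simp

lemma PP_rec: "PP \<alpha> (Suc (Suc n)) = PP \<alpha> n - real (cf_a \<alpha> (Suc n)) * PP \<alpha> (Suc n)"
proof -
  have r: "0 < cf_rem \<alpha> n" using rem_props[OF A] by auto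
  have "PP \<alpha> (Suc (Suc n)) = PP \<alpha> n * cf_rem \<alpha> n * (1 / cf_rem \<alpha> n - real (cf_a \<alpha> (Suc n)))"
    using a_props(3)[OF A] by (simp add: PP_Suc)
  also have "\<dots> = PP \<alpha> n - real (cf_a \<alpha> (Suc n)) * PP \<alpha> (Suc n)"
    using r by (simp add: PP_Suc field_simps)
  finally show ?thesis .
qed

lemma PP_lt: "PP \<alpha> (Suc n) < PP \<alpha> n"
  using PP_pos[of n] rem_props[OF A, of n] by (simp add: PP_Suc)

lemma PP_le_alpha: "PP \<alpha> (Suc n) \<le> \<alpha>"
proof (induction n)
  case 0 then show ?case by (simp add: PP_def)
next
  case (Suc n) then show ?case using PP_lt[of "Suc n"] by linarith
qed

lemma W_one: "real (qq \<alpha> (Suc n)) * PP \<alpha> n + real (qq \<alpha> n) * PP \<alpha> (Suc n) = 1"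
proof (induction n)
  case 0 then show ?case by (simp add: PP_def qq_1)
next
  case (Suc n)
  show ?case using Suc by (simp add: qq_rec PP_rec algebra_simps)
qed

lemma E_eq: "real (qq \<alpha> n) * \<alpha> - of_int (pp \<alpha> n) = (-1)^(n+1) * PP \<alpha> n
  \<and> real (qq \<alpha> (Suc n)) * \<alpha> - of_int (pp \<alpha> (Suc n)) = (-1)^(n+2) * PP \<alpha> (Suc n)"
proof (induction n)
  case 0 then show ?case by (simp add: PP_def qq_1)
next
  case (Suc n)
  have "real (qq \<alpha> (Suc (Suc n))) * \<alpha> - of_int (pp \<alpha> (Suc (Suc n)))
     = real (cf_a \<alpha> (Suc n)) * (real (qq \<alpha> (Suc n)) * \<alpha> - of_int (pp \<alpha> (Suc n)))
       + (real (qq \<alpha> n) * \<alpha> - of_int (pp \<alpha> n))"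
    by (simp add: qq_rec algebra_simps)
  also have "\<dots> = (-1)^(n+3) * PP \<alpha> (Suc (Suc n))"
  proof -
    have s3: "(-1::real)^(n+3) = -((-1)^n)" "(-1::real)^(n+1) = -((-1)^n)" "(-1::real)^(n+2) = (-1)^n" by (simp_all add: power_add)
    show ?thesis using Suc unfolding s3 by (simp add: PP_rec algebra_simps)
  qed
  finally show ?case using Suc by (simp add: power_add)
qed

lemma alpha_half: assumes "cf_a \<alpha> 1 \<ge> 2" shows "\<alpha> < 1/2"
proof -
  have "real (cf_a \<alpha> 1) = of_int \<lfloor>1 / \<alpha>\<rfloor>" using a_props(1)[OF A, of 0] by simp
  then have "2 \<le> 1 / \<alpha>" using assms by linarith
  then have "\<alpha> \<le> 1/2" using A by (simp add: field_simps)
  moreover have "\<alpha> \<noteq> 1/2"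
  proof
    assume "\<alpha> = 1/2"
    then have "\<alpha> = real_of_int 1 / real_of_int 2" by simp
    then have "\<alpha> \<in> \<rat>" by (metis Rats_divide Rats_of_int)
    then show False using A by simp
  qed
  ultimately show ?thesis by simp
qed

lemma dist_q: assumes "cf_a \<alpha> 1 \<ge> 2" shows "dist_int (real (cf_q \<alpha> j) * \<alpha>) = PP \<alpha> (Suc j)"
proof -
  have qj: "qq \<alpha> (Suc j) = cf_q \<alpha> j" by (simp add: qq.simps)
  have e: "real (qq \<alpha> (Suc j)) * \<alpha> - of_int (pp \<alpha> (Suc j)) = (-1)^(j+2) * PP \<alpha> (Suc j)"
    using E_eq[of j] by blast
  have ab: "\<bar>real (cf_q \<alpha> j) * \<alpha> - of_int (pp \<alpha> (Suc j))\<bar> = PP \<alpha> (Suc j)"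
    using e PP_pos[of "Suc j"] qj by (simp add: abs_mult)
  have "PP \<alpha> (Suc j) < 1/2" using PP_le_alpha[of j] alpha_half[OF assms] by linarith
  then have "round (real (cf_q \<alpha> j) * \<alpha>) = pp \<alpha> (Suc j)" using ab by (intro round_unique') simp
  then show ?thesis using ab by (simp add: dist_int_def)
qed

lemma qq_ge: assumes "cf_a \<alpha> 1 \<ge> 2" shows "n \<ge> 1 \<Longrightarrow> qq \<alpha> n \<ge> 1" "n \<ge> 2 \<Longrightarrow> qq \<alpha> n \<ge> 2"
    "qq \<alpha> (Suc (Suc n)) \<ge> qq \<alpha> (Suc n) + qq \<alpha> n"
proof -
  have st: "qq \<alpha> (Suc (Suc n)) \<ge> qq \<alpha> (Suc n) + qq \<alpha> n" for n
    using a_props(2)[OF A, of n] by (simp add: qq_rec)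
  then show "qq \<alpha> (Suc (Suc n)) \<ge> qq \<alpha> (Suc n) + qq \<alpha> n" .
  have two: "qq \<alpha> (Suc (Suc n)) \<ge> 2" for n
  proof (induction n)
    case 0 then show ?case using assms by (simp add: qq_2[simplified numeral_2_eq_2])
  next
    case (Suc n) then show ?case using st[of "Suc n"] by simp
  qed
  show "n \<ge> 2 \<Longrightarrow> qq \<alpha> n \<ge> 2" using two by (metis add_2_eq_Suc le_Suc_ex)
  show "n \<ge> 1 \<Longrightarrow> qq \<alpha> n \<ge> 1"
    using two[of "n-2"] qq_1[of \<alpha>] by (cases "n = 1") (auto simp: numeral_2_eq_2 Suc_diff_Suc)
qed

end


theorem lemma3p2:
  fixes \<alpha> :: real and m k :: nat
  assumes "0 < \<alpha>" "\<alpha> < 1" "\<alpha> \<notin> \<rat>"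
    and "cf_a \<alpha> 1 \<ge> 2"
    and "m > 0" and "k \<ge> 2"
    and "dist_int (real m * \<alpha>) \<ge>
           dist_int (real (cf_q \<alpha> (k - 1)) * \<alpha>)
           + (real (cf_a \<alpha> (k + 1)) + 1) * dist_int (real (cf_q \<alpha> k) * \<alpha>)"
  shows "int (ab \<alpha> m) < int (cf_q \<alpha> k) - 1"
proof -
  note A = assms(1,2,3)
  define q where "q = real (cf_q \<alpha> k)"
  define q' where "q' = real (cf_q \<alpha> (k - 1))"
  define a where "a = real (cf_a \<alpha> (Suc k))"
  define Pk where "Pk = PP \<alpha> k"
  define x where "x = PP \<alpha> (Suc k)"
  define y where "y = PP \<alpha> (Suc (Suc k))"
  have qk: "qq \<alpha> (Suc k) = cf_q \<alpha> k" by (simp add: qq.simps)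
  have qk': "qq \<alpha> k = cf_q \<alpha> (k - 1)" using assms(6) by (cases k) (auto simp: qq.simps)
  have d1: "dist_int (real (cf_q \<alpha> (k - 1)) * \<alpha>) = Pk"
    using dist_q[OF A assms(4), of "k-1"] assms(6) unfolding Pk_def by simp
  have d2: "dist_int (real (cf_q \<alpha> k) * \<alpha>) = x"
    using dist_q[OF A assms(4), of k] unfolding x_def by simp
  have hyp: "dist_int (real m * \<alpha>) \<ge> Pk + (a + 1) * x"
    using assms(7) d1 d2 unfolding a_def by simp
  have W: "q * Pk + q' * x = 1" using W_one[OF A, of k] qk qk' unfolding q_def q'_def Pk_def x_def by simp
  have R: "y = Pk - a * x" using PP_rec[OF A, of k] unfolding y_def Pk_def a_def x_def by simp
  have yx: "y < x" using PP_lt[OF A, of "Suc k"] unfolding y_def x_def .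
  have xpos: "0 < x" using PP_pos[OF A] unfolding x_def by simp
  have a1: "a \<ge> 1" using a_props(2)[OF A, of k] unfolding a_def by simp
  have q'2: "q' \<ge> 2" using qq_ge(2)[OF A assms(4), of k] assms(6) qk' unfolding q'_def by simp
  have kk: "qq \<alpha> (Suc k) \<ge> qq \<alpha> k + qq \<alpha> (k - 1)"
  proof -
    obtain j where j: "k = Suc j" using assms(6) by (cases k) auto
    show ?thesis using qq_ge(3)[OF A assms(4), of j] unfolding j by simp
  qed
  have "qq \<alpha> (k - 1) \<ge> 1" using qq_ge(1)[OF A assms(4), of "k-1"] assms(6) by simp
  then have qq1: "q \<ge> q' + 1" using kk qk qk' unfolding q_def q'_def by linarith
  have c1: "(a + 1) * (q - 2) \<ge> q'"
  proof -
    have "(a + 1) * (q - 2) \<ge> 2 * (q - 2)" using a1 qq1 q'2 by (intro mult_right_mono) auto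
    moreover have "2 * (q - 2) = 2 * q - 4" by simp
    ultimately show ?thesis using qq1 q'2 by linarith
  qed
  have c2: "x * ((a + 1) * (q - 2) - q') \<ge> 0" using c1 xpos by simp
  have iden: "(Pk + (a + 1) * x) * (q - 1) - (q * Pk + q' * x) = x * ((a + 1) * (q - 2) - q') + (x - y)"
    using R by (simp add: algebra_simps)
  have main: "(Pk + (a + 1) * x) * (q - 1) \<ge> 1" using iden W c2 yx by linarith
  have q1: "q - 1 > 0" using qq1 q'2 by linarith
  have dm: "dist_int (real m * \<alpha>) * (q - 1) \<ge> 1"
  proof -
    have "(Pk + (a + 1) * x) * (q - 1) \<le> dist_int (real m * \<alpha>) * (q - 1)"
      using hyp q1 by (intro mult_right_mono) auto
    then show ?thesis using main by linarith
  qed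
  define S where "S = (\<lambda>e. \<exists>w\<in>sturm_lang \<alpha>. abelian_power w m e)"
  have bnd: "\<And>e. S e \<Longrightarrow> real e < q - 1"
  proof -
    fix e assume "S e"
    then obtain w where "w \<in> sturm_lang \<alpha>" "abelian_power w m e" unfolding S_def by blast
    then have h: "real e * dist_int (real m * \<alpha>) < 1" using abel_bound A(1,2) assms(5) by blast
    have "real e * 1 \<le> real e * (dist_int (real m * \<alpha>) * (q - 1))"
      using dm by (intro mult_left_mono) auto
    moreover have "(real e * dist_int (real m * \<alpha>)) * (q - 1) < 1 * (q - 1)"
      using h q1 by (rule mult_strict_right_mono)
    ultimately show "real e < q - 1" by (simp add: mult.assoc)
  qed
  have S0: "S 0"
  proof -
    have "[] \<in> sturm_lang \<alpha>" unfolding sturm_lang_def by (intro CollectI exI[of _ False] exI[of _ 0]) simp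
    moreover have "abelian_power [] m 0" unfolding abelian_power_def by simp
    ultimately show ?thesis unfolding S_def by blast
  qed
  have "S (Greatest S)"
  proof (rule GreatestI_nat[of S 0 "cf_q \<alpha> k"])
    show "S 0" by (rule S0)
    fix e assume "S e" then have "real e < q - 1" by (rule bnd)
    then show "e \<le> cf_q \<alpha> k" unfolding q_def by simp
  qed
  then have "real (ab \<alpha> m) < q - 1" using bnd unfolding ab_def S_def by blast
  then show ?thesis unfolding q_def by linarith
qed

end
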